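(* Let $\Pi=(\mathsf A,\mathsf B)$ and $\Pi'=(\mathsf C,\mathsf D)$ be two $m$-round protocols with $\chi_\Pi\equiv\chi_{\Pi'}$, and let $\mathcal F$ be a frontier of nodes. Assume that $\mathrm{SD}(L_\Pi,L_{\Pi'})\le\varepsilon$, $\Pr_{\ell\leftarrow L_\Pi}[\ell\in\mathcal L_1(\Pi)\mid \ell\in\mathrm{desc}(\mathcal F)]\le\alpha$ and $\Pr_{\ell\leftarrow L_{\Pi'}}[\ell\in\mathcal L_1(\Pi)\mid \ell\in\mathrm{desc}(\mathcal F)]\ge\beta$, for some $\varepsilon>0$ and $0\le\alpha<\beta\le1$. Then $\Pr_{\ell\leftarrow L_\Pi}[\ell\in\mathrm{desc}(\mathcal F)]\le\varepsilon\cdot\frac{1+\beta}{\beta-\alpha}$.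
   Context: An $m$-round single-bit-message protocol is identified with the complete binary tree of height $m$ (nodes are binary strings of length at most $m$, leaves have length $m$); $e_\Pi(u,ub)$ is the probability the next bit is $b$ given transcript $u$, $L_\Pi$ is the distribution of the leaf (full transcript) of a random execution, and $\chi_\Pi$ maps each leaf to the common output in $\{0,1\}$. $\mathcal L_1(\Pi)=\{\ell:\chi_\Pi(\ell)=1\}$. $\mathrm{desc}(\mathcal F)$ is the set of nodes having an ancestor (possibly itself) in $\mathcal F$. A frontier is a set of nodes no one of which is a proper descendant of another. $\mathrm{SD}$ is statistical distance. *)

theory Defs
  imports Complex_Main "HOL-Library.Sublist"
begin

text \<open>Nodes of the complete binary tree of height m are bit strings of length at most m;
  leaves have length exactly m.  A protocol is given by its edge probabilities
  e u b = probability that the next bit is b given transcript u.\<close>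

definition nodes :: "nat \<Rightarrow> bool list set" where
  "nodes m = {u. length u \<le> m}"

definition leaves :: "nat \<Rightarrow> bool list set" where
  "leaves m = {l. length l = m}"

definition is_protocol :: "nat \<Rightarrow> (bool list \<Rightarrow> bool \<Rightarrow> real) \<Rightarrow> bool" where
  "is_protocol m e = (\<forall>u. length u < m \<longrightarrow>
      e u True \<ge> 0 \<and> e u False \<ge> 0 \<and> e u True + e u False = 1)"

definition leaf_prob :: "nat \<Rightarrow> (bool list \<Rightarrow> bool \<Rightarrow> real) \<Rightarrow> bool list \<Rightarrow> real" where
  "leaf_prob m e l = (if length l = m then (\<Prod>i<m. e (take i l) (l ! i)) else 0)"

definition prob_of :: "nat \<Rightarrow> (bool list \<Rightarrow> bool \<Rightarrow> real) \<Rightarrow> bool list set \<Rightarrow> real" where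
  "prob_of m e S = (\<Sum>l\<in>leaves m \<inter> S. leaf_prob m e l)"

text \<open>Conditional probability Pr[A | B] (with the HOL convention x / 0 = 0).\<close>
definition cond_prob :: "nat \<Rightarrow> (bool list \<Rightarrow> bool \<Rightarrow> real) \<Rightarrow> bool list set \<Rightarrow> bool list set \<Rightarrow> real" where
  "cond_prob m e A B = prob_of m e (A \<inter> B) / prob_of m e B"

definition SD :: "nat \<Rightarrow> (bool list \<Rightarrow> bool \<Rightarrow> real) \<Rightarrow> (bool list \<Rightarrow> bool \<Rightarrow> real) \<Rightarrow> real" where
  "SD m e e' = (1/2) * (\<Sum>l\<in>leaves m. \<bar>leaf_prob m e l - leaf_prob m e' l\<bar>)"

definition desc :: "bool list set \<Rightarrow> bool list set" where
  "desc F = {v. \<exists>u\<in>F. prefix u v}"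

definition frontier :: "nat \<Rightarrow> bool list set \<Rightarrow> bool" where
  "frontier m F = (F \<subseteq> nodes m \<and> (\<forall>u\<in>F. \<forall>v\<in>F. \<not> strict_prefix u v))"

text \<open>Leaves with output 1 (chi l = True means output 1).\<close>
definition L1 :: "nat \<Rightarrow> (bool list \<Rightarrow> bool) \<Rightarrow> bool list set" where
  "L1 m chi = {l \<in> leaves m. chi l}"

end

theory Submission
  imports Defs
begin

lemma leaf_prob_nonneg:
  assumes "is_protocol m e" shows "leaf_prob m e l \<ge> 0"
proof -
  have "0 \<le> e u b" if "length u < m" for u b
    using assms that unfolding is_protocol_def by (cases b) auto
  then show ?thesis unfolding leaf_prob_def by (auto intro!: prod_nonneg)
qed

lemma mass_aux:
  assumes "is_protocol m e" "n \<le> m"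
  shows "(\<Sum>l\<in>{l::bool list. length l = n}. \<Prod>i<n. e (take i l) (l ! i)) = 1"
  using assms(2)
proof (induction n)
  case 0
  then show ?case by simp
next
  case (Suc n)
  have IH: "(\<Sum>l\<in>{l::bool list. length l = n}. \<Prod>i<n. e (take i l) (l ! i)) = 1"
    using Suc by simp
  have img: "{l::bool list. length l = Suc n} = (\<lambda>(l,b). l @ [b]) ` ({l. length l = n} \<times> UNIV)"
  proof (rule set_eqI, rule iffI)
    fix x :: "bool list" assume "x \<in> {l. length l = Suc n}"
    then have "x = butlast x @ [last x]" "length (butlast x) = n"
      by (auto intro: append_butlast_last_id[symmetric])
    then show "x \<in> (\<lambda>(l,b). l @ [b]) ` ({l. length l = n} \<times> UNIV)"
      by (metis (mono_tags, lifting) UNIV_I case_prod_conv image_eqI mem_Collect_eq mem_Sigma_iff)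
  qed auto
  have inj: "inj_on (\<lambda>(l::bool list,b::bool). l @ [b]) ({l. length l = n} \<times> UNIV)"
    by (auto simp: inj_on_def)
  have fin: "finite {l::bool list. length l = n}" by (rule finite_list_length)
  have prodeq: "(\<Prod>i<Suc n. e (take i (l @ [b])) ((l @ [b]) ! i))
      = (\<Prod>i<n. e (take i l) (l ! i)) * e l b" if "length l = n" for l b
  proof -
    have "(\<Prod>i<Suc n. e (take i (l @ [b])) ((l @ [b]) ! i))
        = (\<Prod>i<n. e (take i (l @ [b])) ((l @ [b]) ! i)) * e (take n (l @ [b])) ((l @ [b]) ! n)"
      by simp
    also have "(\<Prod>i<n. e (take i (l @ [b])) ((l @ [b]) ! i)) = (\<Prod>i<n. e (take i l) (l ! i))"
      using that by (intro prod.cong) (auto simp: nth_append)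
    finally show ?thesis using that by (simp add: nth_append)
  qed
  have "(\<Sum>l\<in>{l::bool list. length l = Suc n}. \<Prod>i<Suc n. e (take i l) (l ! i))
      = (\<Sum>(l,b)\<in>{l::bool list. length l = n} \<times> UNIV. \<Prod>i<Suc n. e (take i (l @ [b])) ((l @ [b]) ! i))"
    unfolding img by (subst sum.reindex[OF inj]) (simp add: case_prod_beta')
  also have "\<dots> = (\<Sum>l\<in>{l::bool list. length l = n}. \<Sum>b\<in>UNIV. \<Prod>i<Suc n. e (take i (l @ [b])) ((l @ [b]) ! i))"
    by (subst sum.cartesian_product) simp
  also have "\<dots> = (\<Sum>l\<in>{l::bool list. length l = n}. (\<Prod>i<n. e (take i l) (l ! i)))"
  proof (rule sum.cong)
    fix l assume l: "l \<in> {l::bool list. length l = n}"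
    have "e l True + e l False = 1" using assms(1) Suc.prems l unfolding is_protocol_def by auto
    then show "(\<Sum>b\<in>UNIV. \<Prod>i<Suc n. e (take i (l @ [b])) ((l @ [b]) ! i)) = (\<Prod>i<n. e (take i l) (l ! i))"
    proof -
      have "(\<Sum>b\<in>UNIV. \<Prod>i<Suc n. e (take i (l @ [b])) ((l @ [b]) ! i))
          = (\<Sum>b\<in>UNIV. (\<Prod>i<n. e (take i l) (l ! i)) * e l b)"
        using l by (intro sum.cong) (simp_all only: prodeq mem_Collect_eq)
      also have "\<dots> = (\<Prod>i<n. e (take i l) (l ! i)) * (e l True + e l False)"
        by (simp add: UNIV_bool distrib_left)
      finally show ?thesis using \<open>e l True + e l False = 1\<close> by simp
    qed
  qed simp
  finally show ?case using IH by simp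
qed

lemma mass1:
  assumes "is_protocol m e"
  shows "(\<Sum>l\<in>leaves m. leaf_prob m e l) = 1"
proof -
  have "(\<Sum>l\<in>leaves m. leaf_prob m e l) = (\<Sum>l\<in>{l::bool list. length l = m}. \<Prod>i<m. e (take i l) (l ! i))"
    unfolding leaves_def leaf_prob_def by (rule sum.cong) auto
  then show ?thesis using mass_aux[OF assms, of m] by simp
qed

lemma diff_le_SD:
  assumes "is_protocol m e" "is_protocol m e'"
  shows "prob_of m e S - prob_of m e' S \<le> SD m e e'"
proof -
  let ?x = "leaf_prob m e" and ?y = "leaf_prob m e'"
  have fin: "finite (leaves m)" unfolding leaves_def by (rule finite_list_length)
  let ?T = "leaves m \<inter> S" and ?U = "leaves m - S"
  have split: "\<And>f. sum f (leaves m) = sum f ?T + sum f ?U"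
    using fin by (metis Diff_Int2 inf.idem sum.Int_Diff)
  have z: "(\<Sum>l\<in>leaves m. ?x l - ?y l) = 0"
    using mass1[OF assms(1)] mass1[OF assms(2)] by (simp add: sum_subtractf)
  have a: "(\<Sum>l\<in>?T. ?x l - ?y l) \<le> (\<Sum>l\<in>?T. \<bar>?x l - ?y l\<bar>)" by (rule sum_mono) simp
  have b: "-(\<Sum>l\<in>?U. ?x l - ?y l) \<le> (\<Sum>l\<in>?U. \<bar>?x l - ?y l\<bar>)"
    by (simp add: sum_negf[symmetric] del: sum_negf) (rule sum_mono, simp)
  have "(\<Sum>l\<in>?T. ?x l - ?y l) + (\<Sum>l\<in>?U. ?x l - ?y l) = 0" using z split by metis
  moreover have "(\<Sum>l\<in>leaves m. \<bar>?x l - ?y l\<bar>) = (\<Sum>l\<in>?T. \<bar>?x l - ?y l\<bar>) + (\<Sum>l\<in>?U. \<bar>?x l - ?y l\<bar>)"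
    using split by metis
  moreover have "prob_of m e S - prob_of m e' S = (\<Sum>l\<in>?T. ?x l - ?y l)"
    unfolding prob_of_def by (simp add: sum_subtractf)
  ultimately show ?thesis unfolding SD_def using a b by linarith
qed

theorem proposition2p8:
  fixes m :: nat and e e' :: "bool list \<Rightarrow> bool \<Rightarrow> real"
    and chi :: "bool list \<Rightarrow> bool" and F :: "bool list set"
    and \<epsilon> \<alpha> \<beta> :: real
  assumes "is_protocol m e" and "is_protocol m e'"
    and "frontier m F"
    and "SD m e e' \<le> \<epsilon>"
    and "cond_prob m e (L1 m chi) (desc F) \<le> \<alpha>"
    and "cond_prob m e' (L1 m chi) (desc F) \<ge> \<beta>"
    and "\<epsilon> > 0" and "0 \<le> \<alpha>" and "\<alpha> < \<beta>" and "\<beta> \<le> 1"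
  shows "prob_of m e (desc F) \<le> \<epsilon> * (1 + \<beta>) / (\<beta> - \<alpha>)"
proof -
  define p where "p = prob_of m e (desc F)"
  define q where "q = prob_of m e' (desc F)"
  define a where "a = prob_of m e (L1 m chi \<inter> desc F)"
  define b where "b = prob_of m e' (L1 m chi \<inter> desc F)"
  have bpos: "\<beta> > 0" using assms by linarith
  have sds: "SD m e' e = SD m e e'" unfolding SD_def by (simp add: abs_minus_commute)
  have d1: "b - a \<le> \<epsilon>" using diff_le_SD[OF assms(2,1), of "L1 m chi \<inter> desc F"] assms(4) sds
    unfolding a_def b_def by linarith
  have d2: "p - q \<le> \<epsilon>" using diff_le_SD[OF assms(1,2), of "desc F"] assms(4)
    unfolding p_def q_def by linarith
  have p0: "p \<ge> 0" unfolding p_def prob_of_def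
    by (intro sum_nonneg leaf_prob_nonneg[OF assms(1)])
  have q0: "q \<ge> 0" unfolding q_def prob_of_def
    by (intro sum_nonneg leaf_prob_nonneg[OF assms(2)])
  have rhs: "\<epsilon> * (1 + \<beta>) / (\<beta> - \<alpha>) > 0" using assms bpos by simp
  show ?thesis
  proof (cases "p = 0")
    case True then show ?thesis using rhs p_def by simp
  next
    case False
    then have pp: "p > 0" using p0 by simp
    have "a / p \<le> \<alpha>" using assms(5) unfolding cond_prob_def a_def p_def by simp
    then have ha: "a \<le> \<alpha> * p" using pp by (simp add: divide_le_eq)
    have "b / q \<ge> \<beta>" using assms(6) unfolding cond_prob_def b_def q_def by simp
    moreover have "q \<noteq> 0" using calculation bpos by auto
    ultimately have hb: "b \<ge> \<beta> * q" using q0 by (simp add: le_divide_eq)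
    have "\<beta> * (p - \<epsilon>) \<le> \<beta> * q" using d2 bpos by simp
    then have "p * (\<beta> - \<alpha>) \<le> \<epsilon> * (1 + \<beta>)" using ha hb d1
      by (simp add: algebra_simps)
    then show ?thesis using assms(9) unfolding p_def by (simp add: le_divide_eq)
  qed
qed

end
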